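(* Let $n\mid(q-1)$, let $b\ge1$, $m\ge1$ be integers with $\gcd(b,n)=1$, let $t\in\{0,\dots,n-1\}$, and let $\ell$ be any integer with $m+1\le\ell\le n-2$. Put $A=\{\alpha^{t},\alpha^{t+b},\dots,\alpha^{t+(m-1)b},\alpha^{t+\ell b}\}$ and let $d_A^{\perp}$ be the minimum distance of the dual of $C_A$. Then $C_A$ is an optimal cyclic $(d_A^{\perp}-1)$-LRC, i.e. an optimal $(d_A^{\perp}-1,2)$-LRC.
   Context: Let $q$ be a prime power and $n\mid(q-1)$, so the set $R_n$ of all $n$-th roots of unity lies in $\mathbb{F}_q$; let $\alpha\in\mathbb{F}_q$ be a primitive $n$-th root of unity. For $Z\subseteq R_n$, $C_Z$ denotes the cyclic code of length $n$ over $\mathbb{F}_q$ with complete defining set $Z$, i.e. the ideal generated by $\prod_{\beta\in Z}(x-\beta)$ in $\mathbb{F}_q[x]/(x^n-1)$, identified with a subspace of $\mathbb{F}_q^n$; it has dimension $n-|Z|$. Locality: for a linear code $C\subseteq\mathbb{F}_q^n$ and integers $r\ge1$, $\delta\ge2$, the $i$-th coordinate has $(r,\delta)$-locality if there is $S_i\subseteq\{1,\dots,n\}$ with $i\in S_i$, $|S_i|\le r+\delta-1$ such that the punctured code $C|_{S_i}$ has minimum distance at least $\delta$; $C$ is an $(r,\delta)$-LRC if every coordinate has $(r,\delta)$-locality; an $r$-LRC is an $(r,2)$-LRC. An $[n,k,d]$ $(r,\delta)$-LRC is optimal if $d=n-k-(\lceil k/r\rceil-1)(\delta-1)+1$ (this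 quantity is always an upper bound on $d$); for $\delta=2$ this reads $d=n-k-\lceil k/r\rceil+2$. *)

theory Defs
  imports "HOL-Computational_Algebra.Polynomial" "HOL-Library.Cardinality"
begin

text \<open>Words of length n over a field are modelled as functions nat => 'a that vanish
  outside the coordinate set {0..<n}; a code is a set of such words.\<close>

definition words :: "nat \<Rightarrow> (nat \<Rightarrow> 'a::zero) set" where
  "words n = {c. \<forall>i\<ge>n. c i = 0}"

definition word_poly :: "nat \<Rightarrow> (nat \<Rightarrow> 'a::comm_ring_1) \<Rightarrow> 'a poly" where
  "word_poly n c = (\<Sum>i<n. monom (c i) i)"

definition gen_poly :: "'a::field set \<Rightarrow> 'a poly" where
  "gen_poly Z = (\<Prod>\<beta>\<in>Z. [:-\<beta>, 1:])"

text \<open>Cyclic code with complete defining set Z: the ideal generated by gen_poly Z in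
  F[x]/(x^n - 1); since gen_poly Z divides x^n - 1, its elements (as polynomials of
  degree < n) are exactly the multiples of gen_poly Z.\<close>
definition cyclic_code :: "nat \<Rightarrow> 'a::field set \<Rightarrow> (nat \<Rightarrow> 'a) set" where
  "cyclic_code n Z = {c \<in> words n. gen_poly Z dvd word_poly n c}"

definition dual_code :: "nat \<Rightarrow> (nat \<Rightarrow> 'a::field) set \<Rightarrow> (nat \<Rightarrow> 'a) set" where
  "dual_code n C = {y \<in> words n. \<forall>c\<in>C. (\<Sum>i<n. c i * y i) = 0}"

definition weight :: "nat \<Rightarrow> (nat \<Rightarrow> 'a::zero) \<Rightarrow> nat" where
  "weight n c = card {i. i < n \<and> c i \<noteq> 0}"

definition min_dist :: "nat \<Rightarrow> (nat \<Rightarrow> 'a::zero) set \<Rightarrow> nat" where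
  "min_dist n C = Inf {weight n c | c. c \<in> C \<and> c \<noteq> (\<lambda>_. 0)}"

definition code_dim :: "(nat \<Rightarrow> 'a::{field,finite}) set \<Rightarrow> nat" where
  "code_dim C = (THE k. card C = CARD('a) ^ k)"

definition is_cyclic :: "nat \<Rightarrow> (nat \<Rightarrow> 'a::zero) set \<Rightarrow> bool" where
  "is_cyclic n C \<longleftrightarrow> (\<forall>c\<in>C. (\<lambda>i. if i < n then c ((i + n - 1) mod n) else 0) \<in> C)"

text \<open>Punctured code C|_S (coordinates outside S set to 0, i.e. deleted).\<close>
definition puncture :: "nat set \<Rightarrow> (nat \<Rightarrow> 'a::zero) set \<Rightarrow> (nat \<Rightarrow> 'a) set" where
  "puncture S C = (\<lambda>c i. if i \<in> S then c i else 0) ` C"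

text \<open>"C|_S has minimum distance at least delta": every nonzero word of C|_S has weight
  at least delta (the zero code counts as having infinite distance).\<close>
definition has_locality :: "nat \<Rightarrow> (nat \<Rightarrow> 'a::zero) set \<Rightarrow> nat \<Rightarrow> nat \<Rightarrow> nat \<Rightarrow> bool" where
  "has_locality n C r \<delta> i \<longleftrightarrow>
     (\<exists>S. S \<subseteq> {..<n} \<and> i \<in> S \<and> card S \<le> r + \<delta> - 1 \<and>
        (\<forall>c\<in>puncture S C. c \<noteq> (\<lambda>_. 0) \<longrightarrow> weight n c \<ge> \<delta>))"

definition is_LRC :: "nat \<Rightarrow> (nat \<Rightarrow> 'a::zero) set \<Rightarrow> nat \<Rightarrow> nat \<Rightarrow> bool" where
  "is_LRC n C r \<delta> \<longleftrightarrow> r \<ge> 1 \<and> \<delta> \<ge> 2 \<and> (\<forall>i<n. has_locality n C r \<delta> i)"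

definition optimal_LRC :: "nat \<Rightarrow> (nat \<Rightarrow> 'a::{field,finite}) set \<Rightarrow> nat \<Rightarrow> nat \<Rightarrow> bool" where
  "optimal_LRC n C r \<delta> \<longleftrightarrow> is_LRC n C r \<delta> \<and>
     int (min_dist n C) = int n - int (code_dim C)
        - (\<lceil>real (code_dim C) / real r\<rceil> - 1) * (int \<delta> - 1) + 1"

end

theory Submission
  imports Defs "HOL-Library.FuncSet"
begin

lemma gen_poly_dvd_iff: "finite Z \<Longrightarrow> gen_poly Z dvd p \<longleftrightarrow> (\<forall>\<beta>\<in>Z. poly p \<beta> = 0)"
proof (induction Z arbitrary: p rule: finite_induct)
  case empty thus ?case by (simp add: gen_poly_def)
next
  case (insert a F)
  have g: "gen_poly (insert a F) = [:-a,1:] * gen_poly F" using insert by (simp add: gen_poly_def)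
  show ?case
  proof
    assume "gen_poly (insert a F) dvd p"
    then obtain h where h: "p = gen_poly (insert a F) * h" by (auto elim: dvdE)
    show "\<forall>\<beta>\<in>insert a F. poly p \<beta> = 0"
    proof
      fix \<beta> assume b: "\<beta> \<in> insert a F"
      have "poly (gen_poly (insert a F)) \<beta> = 0" unfolding gen_poly_def poly_prod
        using insert(1) b by (intro prod_zero) auto
      thus "poly p \<beta> = 0" using h by simp
    qed
  next
    assume H: "\<forall>\<beta>\<in>insert a F. poly p \<beta> = 0"
    hence "[:-a,1:] dvd p" using poly_eq_0_iff_dvd by auto
    then obtain p' where p': "p = [:-a,1:] * p'" by (auto elim: dvdE)
    have "\<forall>\<beta>\<in>F. poly p' \<beta> = 0"
    proof
      fix \<beta> assume b: "\<beta> \<in> F"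
      hence "\<beta> \<noteq> a" using insert(2) by auto
      moreover have "poly p \<beta> = (\<beta> - a) * poly p' \<beta>" unfolding p' by (simp add: algebra_simps)
      moreover have "poly p \<beta> = 0" using H b by simp
      ultimately show "poly p' \<beta> = 0" by simp
    qed
    hence "gen_poly F dvd p'" using insert(3) by blast
    thus "gen_poly (insert a F) dvd p" unfolding g p' by (rule mult_dvd_mono[OF dvd_refl])
  qed
qed

lemma gen_poly_nz: "finite Z \<Longrightarrow> gen_poly Z \<noteq> 0"
  unfolding gen_poly_def by (simp add: prod_zero_iff)

lemma degree_gen_poly: "finite Z \<Longrightarrow> degree (gen_poly Z) = card Z"
  unfolding gen_poly_def by (subst degree_prod_sum_eq) auto

lemma coeff_word_poly: "coeff (word_poly n c) i = (if i < n then c i else 0)"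
  unfolding word_poly_def by (simp add: coeff_sum coeff_monom)

lemma poly_word_poly: "poly (word_poly n c) x = (\<Sum>i<n. c i * x^i)"
  unfolding word_poly_def by (simp add: poly_sum poly_monom)

lemma word_poly_eqI: "c \<in> words n \<Longrightarrow> (\<And>i. coeff p i = c i) \<Longrightarrow> word_poly n c = p"
  by (rule poly_eqI) (auto simp: coeff_word_poly words_def)

definition supw :: "nat set \<Rightarrow> (nat \<Rightarrow> 'a::zero) set" where
  "supw T = {v. \<forall>i. i \<notin> T \<longrightarrow> v i = 0}"

lemma card_supw: "finite T \<Longrightarrow> card (supw T :: (nat \<Rightarrow> 'a::{zero,finite}) set) = CARD('a) ^ card T"
proof -
  assume T: "finite T"
  have "bij_betw (\<lambda>v. restrict v T) (supw T :: (nat \<Rightarrow> 'a) set) (PiE T (\<lambda>_. UNIV))"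
  proof (rule bij_betw_imageI)
    show "inj_on (\<lambda>v. restrict v T) (supw T :: (nat \<Rightarrow> 'a) set)"
    proof (rule inj_onI)
      fix v w :: "nat \<Rightarrow> 'a" assume "v \<in> supw T" "w \<in> supw T" "restrict v T = restrict w T"
      note h = this
      show "v = w"
      proof
        fix i show "v i = w i"
        proof (cases "i \<in> T")
          case True
          have "restrict v T i = restrict w T i" using h(3) by simp
          thus ?thesis using True by simp
        next
          case False thus ?thesis using h(1,2) unfolding supw_def by simp
        qed
      qed
    qed
    show "(\<lambda>v. restrict v T) ` (supw T :: (nat \<Rightarrow> 'a) set) = PiE T (\<lambda>_. UNIV)"
    proof
      show "(\<lambda>v. restrict v T) ` (supw T :: (nat \<Rightarrow> 'a) set) \<subseteq> PiE T (\<lambda>_. UNIV)" by auto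
      show "PiE T (\<lambda>_. UNIV) \<subseteq> (\<lambda>v. restrict v T) ` (supw T :: (nat \<Rightarrow> 'a) set)"
      proof
        fix f :: "nat \<Rightarrow> 'a" assume f: "f \<in> PiE T (\<lambda>_. UNIV)"
        let ?v = "\<lambda>i. if i \<in> T then f i else 0"
        have "?v \<in> supw T" unfolding supw_def by simp
        moreover have "restrict ?v T = f" using f by (auto simp: restrict_def PiE_def extensional_def)
        ultimately show "f \<in> (\<lambda>v. restrict v T) ` (supw T :: (nat \<Rightarrow> 'a) set)"
          by (intro image_eqI[where x="?v"]) simp_all
      qed
    qed
  qed
  hence "card (supw T :: (nat \<Rightarrow> 'a) set) = card (PiE T (\<lambda>_. (UNIV :: 'a set)))" by (rule bij_betw_same_card)
  also have "\<dots> = CARD('a) ^ card T" using T by (simp add: card_PiE)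
  finally show ?thesis .
qed

lemma words_supw: "words k = supw {..<k}" unfolding words_def supw_def by auto

lemma card_words: "card (words k :: (nat \<Rightarrow> 'a::{zero,finite}) set) = CARD('a) ^ k"
  unfolding words_supw by (simp add: card_supw)

lemma card_field_ge2: "CARD('a::{field,finite}) \<ge> 2"
proof -
  have "card {0::'a, 1} \<le> CARD('a)" by (rule card_mono) auto
  thus ?thesis by simp
qed

locale cc =
  fixes \<alpha> :: "'a::{field,finite}" and n b m t l :: nat
  assumes alpha_n: "\<alpha>^n = 1" and prim: "\<forall>j. 0<j \<and> j<n \<longrightarrow> \<alpha>^j \<noteq> 1"
    and b1: "b\<ge>1" and m1: "m\<ge>1" and cop: "coprime b n" and tn: "t<n"
    and ml: "m+1 \<le> l" and ln: "l+2 \<le> n"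
begin

definition "J = {..<m} \<union> {l}"
definition "\<gamma> = \<alpha>^b"
definition "A = {\<alpha> ^ (t + j * b) | j. j < m} \<union> {\<alpha> ^ (t + l * b)}"
definition "C = cyclic_code n A"
definition "mom c j = (\<Sum>i<n. c i * \<alpha>^(t*i) * \<gamma>^(i*j))"
definition "Phi c H = (\<Sum>i<n. c i * \<alpha>^(t*i) * poly H (\<gamma>^i))"
definition "yw H = (\<lambda>i. if i<n then \<alpha>^(t*i) * poly H (\<gamma>^i) else 0)"
definition "rot s c = (\<lambda>i. if i<n then c ((i+s) mod n) else 0)"
definition "proj T c = (\<lambda>i. if i\<in>T then c i else 0)"
definition "supp c = {i. i<n \<and> c i \<noteq> 0}"

lemma n_pos: "n > 0" using ln by simp

lemma alpha_nz: "\<alpha> \<noteq> 0"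
proof
  assume "\<alpha> = 0" thus False using alpha_n n_pos by (simp add: power_0_left)
qed

lemma pow_mod: "(x::'a)^n = 1 \<Longrightarrow> x^k = x^(k mod n)"
proof -
  assume h: "x^n = 1"
  have "x^(n*(k div n) + k mod n) = x^(k mod n)" by (simp only: power_add power_mult h) simp
  thus ?thesis by simp
qed

lemma alpha_one_iff: "\<alpha>^k = 1 \<longleftrightarrow> n dvd k"
proof
  assume "\<alpha>^k = 1"
  hence "\<alpha>^(k mod n) = 1" using pow_mod[OF alpha_n] by simp
  moreover have "k mod n < n" using n_pos by simp
  ultimately have "k mod n = 0" using prim by (metis not_gr0)
  thus "n dvd k" by auto
next
  assume "n dvd k" then obtain q where "k = n*q" by auto
  thus "\<alpha>^k = 1" by (simp add: power_mult alpha_n)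
qed

lemma gamma_n: "\<gamma>^n = 1" unfolding \<gamma>_def by (metis alpha_n power_mult mult.commute power_one)

lemma gamma_nz: "\<gamma> \<noteq> 0" unfolding \<gamma>_def using alpha_nz by simp

lemma gamma_inj_aux: "i \<le> j \<Longrightarrow> j < n \<Longrightarrow> \<gamma>^i = \<gamma>^j \<Longrightarrow> i = j"
proof -
  assume a: "i \<le> j" "j < n" "\<gamma>^i = \<gamma>^j"
  have "\<gamma>^j = \<gamma>^i * \<gamma>^(j-i)" using a(1) by (simp add: power_add[symmetric])
  hence "\<gamma>^(j-i) = 1" using a(3) gamma_nz by simp
  hence "\<alpha>^(b*(j-i)) = 1" unfolding \<gamma>_def by (simp add: power_mult)
  hence "n dvd b*(j-i)" using alpha_one_iff by simp
  hence "n dvd (j-i)" using coprime_dvd_mult_right_iff[of n b "j-i"] cop by (simp add: coprime_commute)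
  moreover have "j - i < n" using a by simp
  ultimately have "j - i = 0" using dvd_imp_le not_gr0 not_less by blast
  thus "i = j" using a(1) by simp
qed

lemma gamma_inj: "inj_on (\<lambda>i. \<gamma>^i) {..<n}"
  unfolding inj_on_def
proof (intro ballI impI)
  fix i j assume "i \<in> {..<n}" "j \<in> {..<n}" "\<gamma>^i = \<gamma>^j"
  thus "i = j" using gamma_inj_aux[of i j] gamma_inj_aux[of j i] by (cases "i \<le> j") auto
qed


lemma l_lt_n: "l < n" using ln by simp
lemma J_sub: "J \<subseteq> {..<n}" unfolding J_def using ml ln by auto
lemma finite_J: "finite J" unfolding J_def by simp
lemma card_J: "card J = m+1" unfolding J_def using ml by simp
lemma A_eq: "A = (\<lambda>j. \<alpha>^(t+j*b)) ` J" unfolding A_def J_def by auto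

lemma alpha_pow_eq: "(\<alpha>^(t+j*b))^i = \<alpha>^(t*i) * \<gamma>^(i*j)"
proof -
  have "(\<alpha>^(t+j*b))^i = \<alpha>^((t+j*b)*i)" by (simp add: power_mult)
  also have "(t+j*b)*i = t*i + b*(i*j)" by (simp add: algebra_simps)
  also have "\<alpha>^(t*i + b*(i*j)) = \<alpha>^(t*i) * (\<alpha>^b)^(i*j)" by (simp add: power_add power_mult)
  finally show ?thesis unfolding \<gamma>_def .
qed

lemma A_inj: "inj_on (\<lambda>j. \<alpha>^(t+j*b)) J"
proof (rule inj_onI)
  fix i j assume ij: "i \<in> J" "j \<in> J" "\<alpha>^(t+i*b) = \<alpha>^(t+j*b)"
  have "(\<alpha>^(t+i*b))^1 = (\<alpha>^(t+j*b))^1" using ij by simp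
  hence "\<alpha>^t * \<gamma>^i = \<alpha>^t * \<gamma>^j" unfolding alpha_pow_eq by simp
  hence "\<gamma>^i = \<gamma>^j" using alpha_nz by simp
  thus "i = j" using gamma_inj ij J_sub unfolding inj_on_def by blast
qed

lemma finite_A: "finite A" unfolding A_eq using finite_J by simp
lemma card_A: "card A = m+1" unfolding A_eq using card_image[OF A_inj] card_J by simp

lemma C_iff: "c \<in> C \<longleftrightarrow> c \<in> words n \<and> (\<forall>j\<in>J. mom c j = 0)"
proof -
  have "c \<in> C \<longleftrightarrow> c \<in> words n \<and> (\<forall>\<beta>\<in>A. poly (word_poly n c) \<beta> = 0)"
    unfolding C_def cyclic_code_def using gen_poly_dvd_iff[OF finite_A] by simp
  also have "\<dots> \<longleftrightarrow> c \<in> words n \<and> (\<forall>j\<in>J. mom c j = 0)"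
    unfolding A_eq poly_word_poly mom_def by (simp add: alpha_pow_eq mult.assoc)
  finally show ?thesis .
qed


lemma Phi_poly: "Phi c H = (\<Sum>j\<le>degree H. coeff H j * mom c j)"
proof -
  have "Phi c H = (\<Sum>i<n. \<Sum>j\<le>degree H. coeff H j * (c i * \<alpha>^(t*i) * \<gamma>^(i*j)))"
    unfolding Phi_def poly_altdef by (simp add: sum_distrib_left power_mult mult_ac)
  also have "\<dots> = (\<Sum>j\<le>degree H. \<Sum>i<n. coeff H j * (c i * \<alpha>^(t*i) * \<gamma>^(i*j)))"
    by (rule sum.swap)
  also have "\<dots> = (\<Sum>j\<le>degree H. coeff H j * mom c j)"
    unfolding mom_def by (simp add: sum_distrib_left)
  finally show ?thesis .
qed

lemma Phi_zero: "c \<in> C \<Longrightarrow> (\<forall>j. coeff H j \<noteq> 0 \<longrightarrow> j \<in> J) \<Longrightarrow> Phi c H = 0"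
  unfolding Phi_poly C_iff by (intro sum.neutral) auto

lemma Phi_diff: "Phi c (H1 - H2) = Phi c H1 - Phi c H2"
  unfolding Phi_def by (simp add: algebra_simps sum_subtractf)

lemma Phi_monom: "Phi c (monom 1 j) = mom c j"
  unfolding Phi_def mom_def by (simp add: poly_monom power_mult)

lemma yw_dual: "(\<forall>j. coeff H j \<noteq> 0 \<longrightarrow> j \<in> J) \<Longrightarrow> yw H \<in> dual_code n C"
proof -
  assume H: "\<forall>j. coeff H j \<noteq> 0 \<longrightarrow> j \<in> J"
  have "yw H \<in> words n" unfolding yw_def words_def by simp
  moreover have "(\<Sum>i<n. c i * yw H i) = 0" if "c \<in> C" for c
  proof -
    have "(\<Sum>i<n. c i * yw H i) = Phi c H" unfolding Phi_def yw_def by (simp add: mult.assoc)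
    thus ?thesis using Phi_zero[OF that H] by simp
  qed
  ultimately show ?thesis unfolding dual_code_def by simp
qed

lemma C_diff: "c1 \<in> C \<Longrightarrow> c2 \<in> C \<Longrightarrow> (\<lambda>i. c1 i - c2 i) \<in> C"
proof -
  assume a: "c1 \<in> C" "c2 \<in> C"
  have "mom (\<lambda>i. c1 i - c2 i) j = mom c1 j - mom c2 j" for j
    unfolding mom_def by (simp add: algebra_simps sum_subtractf)
  thus ?thesis using a unfolding C_iff words_def by auto
qed

lemma K: "i < n \<Longrightarrow> ((i+s) mod n + (n - s mod n)) mod n = i"
proof -
  assume i: "i < n"
  obtain q r where qr: "s = n*q + r" "r < n" using n_pos div_mult_mod_eq[of s n]
    by (metis mod_less_divisor mult.commute)
  have smod: "s mod n = r" using qr by simp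
  have "((i+s) mod n + (n - s mod n)) mod n = (i + s + (n - s mod n)) mod n"
    by (simp add: mod_add_left_eq)
  also have "i + s + (n - s mod n) = i + n*(q+1)" using qr smod by simp
  also have "(i + n*(q+1)) mod n = i" using i by (metis mod_mult_self2 mod_less)
  finally show ?thesis .
qed

lemma rot_inj: "inj_on (\<lambda>i. (i+s) mod n) {..<n}"
proof (rule inj_onI)
  fix i j assume "i \<in> {..<n}" "j \<in> {..<n}" "(i+s) mod n = (j+s) mod n"
  thus "i = j" using K[of i s] K[of j s] by auto
qed

lemma rot_img: "(\<lambda>i. (i+s) mod n) ` {..<n} = {..<n}"
  by (rule endo_inj_surj[OF _ _ rot_inj]) (auto simp: n_pos)

lemma rot_bij: "bij_betw (\<lambda>i. (i+s) mod n) {..<n} {..<n}"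
  unfolding bij_betw_def using rot_inj rot_img by simp

lemma sum_rot: "(\<Sum>i<n. f ((i+s) mod n)) = (\<Sum>i<n. f i)"
  using sum.reindex_bij_betw[OF rot_bij, of f s] by simp

lemma mom_beta: "mom c j = (\<Sum>i<n. c i * (\<alpha>^t * \<gamma>^j)^i)"
proof -
  have "(\<alpha>^t * \<gamma>^j)^i = \<alpha>^(t*i) * \<gamma>^(i*j)" for i
    by (metis power_mult_distrib power_mult mult.commute)
  thus ?thesis unfolding mom_def by (simp add: mult.assoc)
qed

lemma beta_n: "(\<alpha>^t * \<gamma>^j)^n = 1"
proof -
  have "(\<alpha>^t)^n = (\<alpha>^n)^t" by (metis power_mult mult.commute)
  moreover have "(\<gamma>^j)^n = (\<gamma>^n)^j" by (metis power_mult mult.commute)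
  ultimately show ?thesis by (simp add: power_mult_distrib alpha_n gamma_n)
qed

lemma mom_rot: "mom (rot s c) j * (\<alpha>^t * \<gamma>^j)^s = mom c j"
proof -
  define \<beta> where "\<beta> = \<alpha>^t * \<gamma>^j"
  have bn: "\<beta>^n = 1" unfolding \<beta>_def by (rule beta_n)
  have "mom (rot s c) j * \<beta>^s = (\<Sum>i<n. c ((i+s) mod n) * \<beta>^i * \<beta>^s)"
    unfolding mom_beta \<beta>_def[symmetric] rot_def by (simp add: sum_distrib_right)
  also have "\<dots> = (\<Sum>i<n. c ((i+s) mod n) * \<beta>^((i+s) mod n))"
    by (rule sum.cong) (simp_all add: mult.assoc power_add[symmetric] pow_mod[OF bn, symmetric])
  also have "\<dots> = (\<Sum>i<n. c i * \<beta>^i)" by (rule sum_rot)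
  also have "\<dots> = mom c j" unfolding mom_beta \<beta>_def ..
  finally show ?thesis unfolding \<beta>_def .
qed

lemma rot_words: "rot s c \<in> words n" unfolding rot_def words_def by simp

lemma rot_C: "c \<in> C \<Longrightarrow> rot s c \<in> C"
proof -
  assume c: "c \<in> C"
  have "mom (rot s c) j = 0" if "j \<in> J" for j
  proof -
    have "mom (rot s c) j * (\<alpha>^t * \<gamma>^j)^s = 0" using mom_rot c that unfolding C_iff by simp
    moreover have "(\<alpha>^t * \<gamma>^j)^s \<noteq> 0" using alpha_nz gamma_nz by simp
    ultimately show ?thesis using alpha_nz gamma_nz by simp
  qed
  thus ?thesis using rot_words unfolding C_iff by simp
qed

lemma C_cyclic: "is_cyclic n C"
  unfolding is_cyclic_def
proof
  fix c assume "c \<in> C"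
  hence "rot (n-1) c \<in> C" by (rule rot_C)
  moreover have "rot (n-1) c = (\<lambda>i. if i < n then c ((i + n - 1) mod n) else 0)"
    unfolding rot_def using n_pos by (intro ext) simp
  ultimately show "(\<lambda>i. if i < n then c ((i + n - 1) mod n) else 0) \<in> C" by simp
qed

lemma rot_dual: "y \<in> dual_code n C \<Longrightarrow> rot s y \<in> dual_code n C"
proof -
  assume y: "y \<in> dual_code n C"
  have "(\<Sum>i<n. c i * rot s y i) = 0" if c: "c \<in> C" for c
  proof -
    define c' where "c' = rot (n - s mod n) c"
    have "c' \<in> C" unfolding c'_def using rot_C c by simp
    hence "(\<Sum>i<n. c' i * y i) = 0" using y unfolding dual_code_def by simp
    moreover have "(\<Sum>i<n. c' i * y i) = (\<Sum>i<n. c' ((i+s) mod n) * y ((i+s) mod n))"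
      using sum_rot[of "\<lambda>i. c' i * y i" s] by simp
    moreover have "\<dots> = (\<Sum>i<n. c i * rot s y i)"
    proof (rule sum.cong)
      fix i assume i: "i \<in> {..<n}"
      have "c' ((i+s) mod n) = c (((i+s) mod n + (n - s mod n)) mod n)"
        using n_pos unfolding c'_def rot_def by simp
      also have "\<dots> = c i" using i by (simp only: K lessThan_iff)
      finally show "c' ((i+s) mod n) * y ((i+s) mod n) = c i * rot s y i"
        using i unfolding rot_def by simp
    qed simp
    ultimately show ?thesis by simp
  qed
  thus ?thesis using rot_words unfolding dual_code_def by simp
qed

lemma weight_rot: "weight n (rot s y) = weight n y"
proof -
  let ?g = "\<lambda>i. (i+s) mod n"
  have "?g ` {i. i < n \<and> rot s y i \<noteq> 0} = {i. i < n \<and> y i \<noteq> 0}"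
  proof
    show "?g ` {i. i < n \<and> rot s y i \<noteq> 0} \<subseteq> {i. i < n \<and> y i \<noteq> 0}"
      unfolding rot_def using n_pos by auto
    show "{i. i < n \<and> y i \<noteq> 0} \<subseteq> ?g ` {i. i < n \<and> rot s y i \<noteq> 0}"
    proof
      fix i' assume i': "i' \<in> {i. i < n \<and> y i \<noteq> 0}"
      hence "i' \<in> ?g ` {..<n}" using rot_img[of s] by simp
      then obtain i where "i < n" "i' = ?g i" by auto
      thus "i' \<in> ?g ` {i. i < n \<and> rot s y i \<noteq> 0}" using i' unfolding rot_def by auto
    qed
  qed
  moreover have "inj_on ?g {i. i < n \<and> rot s y i \<noteq> 0}"
    using rot_inj[of s] by (rule inj_on_subset) auto
  ultimately show ?thesis unfolding weight_def using card_image by fastforce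
qed


definition "k = n - (m+1)"
lemma k_pos: "k \<ge> 1" unfolding k_def using ml ln by simp
lemma n_eq: "n = k + m + 1" unfolding k_def using ml ln by simp

lemma card_C: "card C = CARD('a) ^ k"
proof -
  define g where "g = gen_poly A"
  have g0: "g \<noteq> 0" unfolding g_def using gen_poly_nz[OF finite_A] .
  have dg: "degree g = m+1" unfolding g_def using degree_gen_poly[OF finite_A] card_A by simp
  define enc where "enc f = (\<lambda>i. coeff (g * word_poly k f) i)" for f :: "nat \<Rightarrow> 'a"
  have dwp: "degree (word_poly k f) \<le> k - 1" for f :: "nat \<Rightarrow> 'a"
    by (rule degree_le) (auto simp: coeff_word_poly)
  have dgh: "degree (g * word_poly k f) < n" for f :: "nat \<Rightarrow> 'a"
  proof -
    have "degree (g * word_poly k f) \<le> degree g + degree (word_poly k f)" by (rule degree_mult_le)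
    also have "\<dots> \<le> m + 1 + (k - 1)" using dg dwp[of f] by simp
    finally show ?thesis using n_eq k_pos by simp
  qed
  have encw: "enc f \<in> words n" for f
    unfolding enc_def words_def using dgh[of f] by (auto intro: coeff_eq_0)
  have wenc: "word_poly n (enc f) = g * word_poly k f" for f
    by (rule word_poly_eqI[OF encw]) (simp add: enc_def)
  have inj: "inj_on enc (words k)"
  proof (rule inj_onI)
    fix f1 f2 assume f: "f1 \<in> words k" "f2 \<in> words k" "enc f1 = enc f2"
    hence "g * word_poly k f1 = g * word_poly k f2" using wenc by metis
    hence "word_poly k f1 = word_poly k f2" using g0 by simp
    hence "coeff (word_poly k f1) i = coeff (word_poly k f2) i" for i by simp
    note ce = this
    show "f1 = f2"
    proof
      fix i show "f1 i = f2 i"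
      proof (cases "i < k")
        case True thus ?thesis using ce[of i] by (simp add: coeff_word_poly)
      next
        case False thus ?thesis using f(1,2) unfolding words_def by simp
      qed
    qed
  qed
  have img: "enc ` words k = C"
  proof
    show "enc ` words k \<subseteq> C"
      using encw wenc unfolding C_def cyclic_code_def g_def by auto
    show "C \<subseteq> enc ` words k"
    proof
      fix c assume c: "c \<in> C"
      hence cw: "c \<in> words n" and "g dvd word_poly n c" unfolding C_def cyclic_code_def g_def by auto
      then obtain h where h: "word_poly n c = g * h" by (auto elim: dvdE)
      have dh: "degree h \<le> k - 1"
      proof (cases "h = 0")
        case False
        have "degree (word_poly n c) \<le> n - 1" by (rule degree_le) (auto simp: coeff_word_poly)
        moreover have "degree (word_poly n c) = degree g + degree h" using h g0 False by (simp add: degree_mult_eq)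
        ultimately show ?thesis using dg n_eq by simp
      qed simp
      define f where "f = (\<lambda>i. if i < k then coeff h i else 0)"
      have fw: "f \<in> words k" unfolding f_def words_def by simp
      have "word_poly k f = h"
        by (rule word_poly_eqI[OF fw]) (use dh k_pos in \<open>auto simp: f_def intro!: coeff_eq_0\<close>)
      have "enc f = c"
      proof
        fix i
        have "enc f i = coeff (word_poly n c) i" unfolding enc_def using h \<open>word_poly k f = h\<close> by simp
        also have "\<dots> = c i" using cw unfolding coeff_word_poly words_def by simp
        finally show "enc f i = c i" .
      qed
      thus "c \<in> enc ` words k" using fw by blast
    qed
  qed
  have "card C = card (words k :: (nat \<Rightarrow> 'a) set)"
    using card_image[OF inj] img by simp
  thus ?thesis by (simp add: card_words)
qed

lemma code_dim_C: "code_dim C = k"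
  unfolding code_dim_def card_C
proof (rule the_equality)
  fix k' assume "CARD('a) ^ k = CARD('a) ^ k'"
  thus "k' = k" using card_field_ge2[where 'a='a] power_inject_exp[of "CARD('a)" k k'] by simp
qed simp


lemma sum_single: "j < n \<Longrightarrow> (\<forall>i<n. i \<noteq> j \<longrightarrow> f i = 0) \<Longrightarrow> (\<Sum>i<n. f i) = f j"
  for f :: "nat \<Rightarrow> 'a"
proof -
  assume j: "j < n" and z: "\<forall>i<n. i \<noteq> j \<longrightarrow> f i = 0"
  have "(\<Sum>i<n. f i) = (\<Sum>i<n. if i = j then f j else 0)" by (rule sum.cong) (use z in auto)
  also have "\<dots> = f j" using j by simp
  finally show ?thesis .
qed

lemma diff_zero: fixes u y :: "nat \<Rightarrow> 'a" assumes "j < n" "y j \<noteq> 0" "\<forall>i<n. i \<noteq> j \<longrightarrow> u i = 0" "(\<Sum>i<n. u i * y i) = 0"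
  shows "u j = 0"
proof -
  have "(\<Sum>i<n. u i * y i) = u j * y j" using assms(1,3) by (intro sum_single) auto
  thus ?thesis using assms(2,4) by simp
qed

lemma sum_diff2: "(\<Sum>i<n. v i * y i) - (\<Sum>i<n. w i * y i) = (\<Sum>i<n. (v i - w i) * y i)"
  for v w y :: "nat \<Rightarrow> 'a"
  by (simp add: sum_subtractf algebra_simps)

lemma finite_supw: "finite T \<Longrightarrow> finite (supw T :: (nat \<Rightarrow> 'a) set)"
  using card_supw[of T, where 'a='a] by (intro card_ge_0_finite) simp

lemma W1_bound:
  fixes y :: "nat \<Rightarrow> 'a"
  assumes T: "T \<subseteq> {..<n}" and j: "j \<in> T" "y j \<noteq> 0"
  defines "W \<equiv> {v \<in> supw T. (\<Sum>i<n. v i * y i) = 0}"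
  shows "finite W \<and> card W \<le> CARD('a) ^ (card T - 1)"
proof -
  have fT: "finite T" using T finite_subset by blast
  have inj: "inj_on (proj (T - {j})) W"
  proof (rule inj_onI)
    fix v w assume v: "v \<in> W" and w: "w \<in> W" and e: "proj (T - {j}) v = proj (T - {j}) w"
    have o: "v i = w i" if "i \<noteq> j" for i
    proof (cases "i \<in> T")
      case True
      have "proj (T - {j}) v i = proj (T - {j}) w i" using e by simp
      thus ?thesis using True that unfolding proj_def by simp
    next
      case False thus ?thesis using v w unfolding W_def supw_def by simp
    qed
    have "(\<Sum>i<n. (v i - w i) * y i) = 0" using v w sum_diff2[of v y w] unfolding W_def by simp
    hence "v j - w j = 0" using j T o by (intro diff_zero[of j y "\<lambda>i. v i - w i"]) auto
    thus "v = w" using o by (intro ext) (metis eq_iff_diff_eq_0)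
  qed
  have sub: "proj (T - {j}) ` W \<subseteq> supw (T - {j})" unfolding proj_def supw_def by auto
  have fin: "finite (supw (T - {j}) :: (nat \<Rightarrow> 'a) set)" using fT by (simp add: finite_supw)
  have "card W \<le> card (supw (T - {j}) :: (nat \<Rightarrow> 'a) set)" by (rule card_inj_on_le[OF inj sub fin])
  also have "\<dots> = CARD('a) ^ (card T - 1)" using fT j by (simp add: card_supw)
  finally show ?thesis using inj_on_finite[OF inj sub fin] by simp
qed

lemma W2_bound:
  fixes ya yb :: "nat \<Rightarrow> 'a"
  assumes T: "T \<subseteq> {..<n}" and j: "j1 \<in> T" "j2 \<in> T" "j1 \<noteq> j2" "ya j1 \<noteq> 0" "yb j1 = 0" "yb j2 \<noteq> 0"
  defines "W \<equiv> {v \<in> supw T. (\<Sum>i<n. v i * ya i) = 0 \<and> (\<Sum>i<n. v i * yb i) = 0}"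
  shows "finite W \<and> card W \<le> CARD('a) ^ (card T - 2)"
proof -
  have fT: "finite T" using T finite_subset by blast
  have inj: "inj_on (proj (T - {j1,j2})) W"
  proof (rule inj_onI)
    fix v w assume v: "v \<in> W" and w: "w \<in> W" and e: "proj (T - {j1,j2}) v = proj (T - {j1,j2}) w"
    have o: "v i = w i" if "i \<noteq> j1" "i \<noteq> j2" for i
    proof (cases "i \<in> T")
      case True
      have "proj (T - {j1,j2}) v i = proj (T - {j1,j2}) w i" using e by simp
      thus ?thesis using True that unfolding proj_def by simp
    next
      case False thus ?thesis using v w unfolding W_def supw_def by simp
    qed
    have s2: "(\<Sum>i<n. (v i - w i) * yb i) = 0" using v w sum_diff2[of v yb w] unfolding W_def by simp
    have "(v j2 - w j2) * yb j2 = 0"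
      using sum_single[of j2 "\<lambda>i. (v i - w i) * yb i"] s2 j T o by fastforce
    hence e2: "v j2 = w j2" using j by simp
    have s1: "(\<Sum>i<n. (v i - w i) * ya i) = 0" using v w sum_diff2[of v ya w] unfolding W_def by simp
    have "(v j1 - w j1) * ya j1 = 0"
      using sum_single[of j1 "\<lambda>i. (v i - w i) * ya i"] s1 j T o e2 by fastforce
    hence e1: "v j1 = w j1" using j by simp
    show "v = w" using o e1 e2 by (intro ext) metis
  qed
  have sub: "proj (T - {j1,j2}) ` W \<subseteq> supw (T - {j1,j2})" unfolding proj_def supw_def by auto
  have fin: "finite (supw (T - {j1,j2}) :: (nat \<Rightarrow> 'a) set)" using fT by (simp add: finite_supw)
  have "card W \<le> card (supw (T - {j1,j2}) :: (nat \<Rightarrow> 'a) set)" by (rule card_inj_on_le[OF inj sub fin])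
  also have "\<dots> = CARD('a) ^ (card T - 2)" using fT j by (simp add: card_supw numeral_2_eq_2)
  finally show ?thesis using inj_on_finite[OF inj sub fin] by simp
qed

lemma pigeon:
  assumes T: "T \<subseteq> {..<n}" and WC: "\<forall>c\<in>C. proj T c \<in> W" and fW: "finite W" and cW: "card W < card C"
  shows "\<exists>c\<in>C. c \<noteq> (\<lambda>_. 0) \<and> weight n c \<le> n - card T"
proof -
  have "\<not> inj_on (proj T) C"
  proof
    assume "inj_on (proj T) C"
    hence "card C = card (proj T ` C)" by (simp add: card_image)
    also have "\<dots> \<le> card W" using WC fW by (intro card_mono) auto
    finally show False using cW by simp
  qed
  then obtain c1 c2 where c: "c1 \<in> C" "c2 \<in> C" "proj T c1 = proj T c2" "c1 \<noteq> c2"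
    unfolding inj_on_def by blast
  define c where "c = (\<lambda>i. c1 i - c2 i)"
  have cC: "c \<in> C" unfolding c_def using C_diff c by simp
  have cnz: "c \<noteq> (\<lambda>_. 0)"
  proof
    assume "c = (\<lambda>_. 0)"
    hence "c1 i = c2 i" for i unfolding c_def by (metis eq_iff_diff_eq_0)
    thus False using c(4) by auto
  qed
  have cT: "c i = 0" if "i \<in> T" for i
  proof -
    have "proj T c1 i = proj T c2 i" using c(3) by simp
    thus ?thesis using that unfolding proj_def c_def by simp
  qed
  have "{i. i < n \<and> c i \<noteq> 0} \<subseteq> {..<n} - T" using cT by auto
  hence "weight n c \<le> card ({..<n} - T)" unfolding weight_def by (intro card_mono) auto
  also have "\<dots> = n - card T" using T by (simp add: card_Diff_subset finite_subset)
  finally show ?thesis using cC cnz by blast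
qed

lemma proj_dual: "y \<in> dual_code n C \<Longrightarrow> (\<forall>i<n. i \<notin> T \<longrightarrow> y i = 0) \<Longrightarrow> c \<in> C
   \<Longrightarrow> (\<Sum>i<n. proj T c i * y i) = 0"
proof -
  assume y: "y \<in> dual_code n C" and z: "\<forall>i<n. i \<notin> T \<longrightarrow> y i = 0" and c: "c \<in> C"
  have "(\<Sum>i<n. proj T c i * y i) = (\<Sum>i<n. c i * y i)" by (rule sum.cong) (use z in \<open>auto simp: proj_def\<close>)
  thus ?thesis using y c unfolding dual_code_def by simp
qed

lemma proj_supw: "proj T c \<in> supw T" unfolding proj_def supw_def by simp


lemma vand:
  assumes cw: "c \<in> words n" and P: "P \<subseteq> {..<n}" and cz: "\<forall>i<n. i \<notin> P \<longrightarrow> c i = 0"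
    and ph: "\<forall>H. degree H < card P \<longrightarrow> Phi c H = 0"
  shows "c i0 = 0"
proof (rule ccontr)
  assume nz: "c i0 \<noteq> 0"
  hence i0n: "i0 < n" using cw unfolding words_def by (cases "i0 < n") auto
  hence i0P: "i0 \<in> P" using cz nz by blast
  have fP: "finite P" using P finite_subset by blast
  define H where "H = (\<Prod>i\<in>P - {i0}. [:-(\<gamma>^i), 1:])"
  have dH: "degree H = card (P - {i0})" unfolding H_def by (subst degree_prod_sum_eq) auto
  have "card P > 0" using fP i0P card_gt_0_iff by blast
  hence "degree H < card P" using dH fP i0P by (simp add: card_Diff_singleton)
  hence "Phi c H = 0" using ph by simp
  moreover have "Phi c H = c i0 * \<alpha>^(t*i0) * poly H (\<gamma>^i0)"
    unfolding Phi_def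
  proof (rule sum_single[OF i0n], intro allI impI)
    fix i assume i: "i < n" "i \<noteq> i0"
    show "c i * \<alpha>^(t*i) * poly H (\<gamma>^i) = 0"
    proof (cases "i \<in> P")
      case True
      have "poly H (\<gamma>^i) = 0" unfolding H_def poly_prod
        using True i fP by (intro prod_zero) (auto intro!: bexI[where x=i])
      thus ?thesis by simp
    next
      case False thus ?thesis using cz i by simp
    qed
  qed
  moreover have "poly H (\<gamma>^i0) \<noteq> 0"
  proof -
    have "\<gamma>^i0 - \<gamma>^i \<noteq> 0" if "i \<in> P - {i0}" for i
    proof
      assume "\<gamma>^i0 - \<gamma>^i = 0"
      hence "\<gamma>^i0 = \<gamma>^i" by simp
      thus False using gamma_inj that i0n P unfolding inj_on_def by auto
    qed
    thus ?thesis unfolding H_def poly_prod using fP by (simp add: prod_zero_iff)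
  qed
  ultimately show False using nz alpha_nz by simp
qed

lemma supp_sub: "supp c \<subseteq> {..<n}" unfolding supp_def by auto
lemma weight_supp: "weight n c = card (supp c)" unfolding weight_def supp_def ..

lemma nonzero_ex: "c \<in> words n \<Longrightarrow> c \<noteq> (\<lambda>_. 0) \<Longrightarrow> \<exists>i<n. c i \<noteq> 0"
proof -
  assume w: "c \<in> words n" and nz: "c \<noteq> (\<lambda>_. 0)"
  show ?thesis
  proof (rule ccontr)
    assume "\<not> (\<exists>i<n. c i \<noteq> 0)"
    hence "c i = 0" for i using w unfolding words_def by (cases "i < n") auto
    thus False using nz by auto
  qed
qed

lemma bch: assumes c: "c \<in> C" "c \<noteq> (\<lambda>_. 0)" shows "weight n c \<ge> m+1"
proof (rule ccontr)
  assume "\<not> weight n c \<ge> m+1"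
  hence w: "card (supp c) \<le> m" unfolding weight_supp by simp
  have cw: "c \<in> words n" using c C_iff by simp
  have "Phi c H = 0" if "degree H < card (supp c)" for H
  proof (rule Phi_zero[OF c(1)], intro allI impI)
    fix j assume "coeff H j \<noteq> 0"
    hence "j \<le> degree H" by (rule le_degree)
    thus "j \<in> J" using that w unfolding J_def by simp
  qed
  hence "c i = 0" for i using vand[OF cw supp_sub] unfolding supp_def by blast
  thus False using c(2) by auto
qed

lemma coeffJ_deg: "(\<forall>j. coeff H j \<noteq> 0 \<longrightarrow> j \<in> J) \<Longrightarrow> degree H \<le> l"
proof -
  assume H: "\<forall>j. coeff H j \<noteq> 0 \<longrightarrow> j \<in> J"
  show ?thesis
  proof (cases "H = 0")
    case False
    hence "coeff H (degree H) \<noteq> 0" by simp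
    hence "degree H \<in> J" using H by blast
    thus ?thesis unfolding J_def using ml by auto
  qed simp
qed

lemma yw_nz: assumes "H \<noteq> 0" "\<forall>j. coeff H j \<noteq> 0 \<longrightarrow> j \<in> J" shows "yw H \<noteq> (\<lambda>_. 0)"
proof
  assume z: "yw H = (\<lambda>_. 0)"
  have "poly H (\<gamma>^i) = 0" if "i < n" for i
  proof -
    have "yw H i = 0" using z by simp
    thus ?thesis using that alpha_nz unfolding yw_def by simp
  qed
  hence "(\<lambda>i. \<gamma>^i) ` {..<n} \<subseteq> {x. poly H x = 0}" by auto
  hence "card ((\<lambda>i. \<gamma>^i) ` {..<n}) \<le> card {x. poly H x = 0}"
    using poly_roots_finite[OF assms(1)] by (rule card_mono[rotated])
  also have "\<dots> \<le> degree H" by (rule card_poly_roots_bound[OF assms(1)])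
  also have "\<dots> \<le> l" by (rule coeffJ_deg[OF assms(2)])
  finally show False using card_image[OF gamma_inj] l_lt_n by simp
qed

lemma mds_case:
  assumes c: "c \<in> C" "c \<noteq> (\<lambda>_. 0)" and w: "weight n c = m+1"
  shows "\<exists>H. H \<noteq> 0 \<and> (\<forall>j. coeff H j \<noteq> 0 \<longrightarrow> j \<in> J) \<and> (\<forall>i\<in>supp c. poly H (\<gamma>^i) = 0)"
proof -
  define P where "P = supp c"
  have fP: "finite P" unfolding P_def using supp_sub finite_subset by blast
  have cP: "card P = m+1" using w unfolding P_def weight_supp .
  have cw: "c \<in> words n" using c C_iff by simp
  define Q where "Q = (\<Prod>i\<in>P. [:-(\<gamma>^i), 1:])"
  have Q0: "Q \<noteq> 0" unfolding Q_def using fP by (simp add: prod_zero_iff)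
  have dQ: "degree Q = m+1" unfolding Q_def using cP by (subst degree_prod_sum_eq) auto
  have Qz: "poly Q (\<gamma>^i) = 0" if "i \<in> P" for i
    unfolding Q_def poly_prod using that fP by (intro prod_zero) (auto intro!: bexI[where x=i])
  define R where "R = monom 1 l mod Q"
  have dR: "degree R \<le> m"
    using degree_mod_less[OF Q0, of "monom 1 l"] dQ unfolding R_def by auto
  have QR0: "(monom 1 l div Q) * Q + R = monom 1 l" unfolding R_def by (rule div_mult_mod_eq)
  have QR: "monom 1 l - R = (monom 1 l div Q) * Q" using QR0 by (simp add: diff_eq_eq)
  have Rz: "poly (monom 1 l - R) (\<gamma>^i) = 0" if "i \<in> P" for i
    unfolding QR using Qz[OF that] by simp
  have cRl: "coeff R j = 0" if "j > m" for j using dR that by (intro coeff_eq_0) simp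
  show ?thesis
  proof (cases "coeff R m = 0")
    case True
    define H where "H = monom 1 l - R"
    have "coeff H l = 1" unfolding H_def using cRl[of l] ml by simp
    hence "H \<noteq> 0" by auto
    moreover have "\<forall>j. coeff H j \<noteq> 0 \<longrightarrow> j \<in> J"
    proof (intro allI impI)
      fix j assume j: "coeff H j \<noteq> 0"
      show "j \<in> J"
      proof (cases "j = l")
        case False
        hence "coeff R j \<noteq> 0" using j unfolding H_def by (simp add: coeff_monom)
        hence "j \<le> m" "j \<noteq> m" using cRl[of j] True by (cases "j \<le> m"; auto)+
        thus ?thesis unfolding J_def by simp
      qed (simp add: J_def)
    qed
    ultimately show ?thesis using Rz unfolding H_def P_def by blast
  next
    case False
    define \<rho> where "\<rho> = coeff R m"
    have \<rho>: "\<rho> \<noteq> 0" using False unfolding \<rho>_def .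
    define G where "G = smult (1/\<rho>) (monom 1 l - (R - monom \<rho> m))"
    have GJ: "\<forall>j. coeff G j \<noteq> 0 \<longrightarrow> j \<in> J"
    proof (intro allI impI)
      fix j assume j: "coeff G j \<noteq> 0"
      show "j \<in> J"
      proof (cases "j = l")
        case False
        hence "coeff R j - (if j = m then \<rho> else 0) \<noteq> 0" using j unfolding G_def by (auto simp: coeff_monom split: if_splits)
        hence "j < m" using cRl[of j] unfolding \<rho>_def by (cases "j = m"; cases "j < m") auto
        thus ?thesis unfolding J_def by simp
      qed (simp add: J_def)
    qed
    have GG: "G - monom 1 m = smult (1/\<rho>) (monom 1 l - R)"
      unfolding G_def by (rule poly_eqI) (simp add: coeff_monom \<rho> field_simps)
    have "Phi c (G - monom 1 m) = 0" unfolding Phi_def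
    proof (rule sum.neutral, intro ballI)
      fix i assume i: "i \<in> {..<n}"
      show "c i * \<alpha>^(t*i) * poly (G - monom 1 m) (\<gamma>^i) = 0"
      proof (cases "i \<in> P")
        case True thus ?thesis unfolding GG using Rz[OF True] by simp
      next
        case False thus ?thesis using i unfolding P_def supp_def by simp
      qed
    qed
    hence mm: "mom c m = 0" using Phi_zero[OF c(1) GJ] Phi_diff[of c G "monom 1 m"] Phi_monom[of c m] by simp
    have "Phi c H = 0" if "degree H < card P" for H
      unfolding Phi_poly
    proof (rule sum.neutral, intro ballI)
      fix j assume "j \<in> {..degree H}"
      hence "j \<le> m" using that cP by simp
      hence "mom c j = 0" using mm c(1) unfolding C_iff J_def by (cases "j = m") auto
      thus "coeff H j * mom c j = 0" by simp
    qed
    hence "c i = 0" for i using vand[OF cw, of P] supp_sub unfolding P_def supp_def by blast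
    thus ?thesis using c(2) by auto
  qed
qed


lemma extend_set: assumes "S \<subseteq> {..<n}" "card S \<le> K" "K \<le> n"
  shows "\<exists>T. S \<subseteq> T \<and> T \<subseteq> {..<n} \<and> card T = K"
proof -
  have fS: "finite S" using assms(1) finite_subset by blast
  have "card ({..<n} - S) = n - card S" using assms(1) by (simp add: card_Diff_subset fS)
  hence "K - card S \<le> card ({..<n} - S)" using assms by simp
  then obtain T' where T': "T' \<subseteq> {..<n} - S" "card T' = K - card S" "finite T'"
    by (rule obtain_subset_with_card_n)
  have "card (S \<union> T') = card S + card T'" using T' fS by (intro card_Un_disjoint) auto
  hence "card (S \<union> T') = K" using T' assms by simp
  thus ?thesis using T' assms(1) by (intro exI[of _ "S \<union> T'"]) auto
qed

lemma min_le: "c \<in> X \<Longrightarrow> c \<noteq> (\<lambda>_. 0) \<Longrightarrow> min_dist n X \<le> weight n c"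
  unfolding min_dist_def by (rule cInf_lower) auto

lemma min_ge: "c \<in> X \<Longrightarrow> c \<noteq> (\<lambda>_. 0) \<Longrightarrow> (\<forall>c\<in>X. c \<noteq> (\<lambda>_. 0) \<longrightarrow> w \<le> weight n c) \<Longrightarrow> w \<le> min_dist n X"
  unfolding min_dist_def by (rule cInf_greatest) auto

lemma min_in: "c \<in> X \<Longrightarrow> c \<noteq> (\<lambda>_. 0) \<Longrightarrow> \<exists>c\<in>X. c \<noteq> (\<lambda>_. 0) \<and> weight n c = min_dist n X"
proof -
  assume "c \<in> X" "c \<noteq> (\<lambda>_. 0)"
  hence "{weight n c | c. c \<in> X \<and> c \<noteq> (\<lambda>_. 0)} \<noteq> {}" by blast
  from Inf_nat_def1[OF this] show ?thesis unfolding min_dist_def by auto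
qed

lemma rot_at: "i < n \<Longrightarrow> j < n \<Longrightarrow> rot (j + n - i) c i = c j"
  unfolding rot_def by simp

lemma main: "is_cyclic n C \<and> optimal_LRC n C (min_dist n (dual_code n C) - 1) 2"
proof -
  define D where "D = dual_code n C"
  define e where "e = min_dist n D"
  define d where "d = min_dist n C"
  have q2: "CARD('a) \<ge> 2" by (rule card_field_ge2)
  have qk: "CARD('a) ^ (k-1) < CARD('a) ^ k" using q2 k_pos by (intro power_strict_increasing) auto
  have cCk: "card C = CARD('a) ^ k" by (rule card_C)
  have J1: "\<forall>j. coeff (1::'a poly) j \<noteq> 0 \<longrightarrow> j \<in> J" using m1 unfolding J_def by (auto simp: coeff_1)
  have y1D: "yw 1 \<in> D" unfolding D_def using yw_dual[OF J1] .
  have y1nz: "yw 1 \<noteq> (\<lambda>_. 0)" using yw_nz[OF _ J1] by simp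
  obtain y0 where y0: "y0 \<in> D" "y0 \<noteq> (\<lambda>_. 0)" "weight n y0 = e"
    using min_in[OF y1D y1nz] unfolding e_def by blast
  have eD: "\<forall>y\<in>D. y \<noteq> (\<lambda>_. 0) \<longrightarrow> e \<le> weight n y" unfolding e_def using min_le by blast
  have y0w: "y0 \<in> words n" using y0 unfolding D_def dual_code_def by simp
  obtain j0 where j0: "j0 < n" "y0 j0 \<noteq> 0" using nonzero_ex[OF y0w y0(2)] by blast
  have S1: "supp y0 \<subseteq> {..<n}" "j0 \<in> supp y0" "card (supp y0) = e"
    using j0 y0 unfolding supp_def weight_def by auto
  have y0z: "\<forall>i<n. i \<notin> supp y0 \<longrightarrow> y0 i = 0" unfolding supp_def by auto
  have fS1: "finite (supp y0)" using S1(1) finite_subset by blast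
  have "card (supp y0) > 0" using card_gt_0_iff S1(2) fS1 by blast
  hence e1: "e \<ge> 1" using S1(3) by simp
  have e2: "e \<ge> 2"
  proof (rule ccontr)
    assume "\<not> e \<ge> 2"
    hence e1': "e = 1" using e1 by simp
    have fS: "finite (supp y0)" using S1 finite_subset by blast
    have "card (supp y0) = 1" using S1(3) e1' by simp
    then obtain x where "supp y0 = {x}" by (rule card_1_singletonE)
    hence "supp y0 = {j0}" using S1(2) by simp
    hence y0o: "\<forall>i<n. i \<noteq> j0 \<longrightarrow> y0 i = 0" unfolding supp_def by blast
    have cj: "c j0 = 0" if "c \<in> C" for c
    proof -
      have "(\<Sum>i<n. c i * y0 i) = 0" using y0 that unfolding D_def dual_code_def by simp
      moreover have "(\<Sum>i<n. c i * y0 i) = c j0 * y0 j0" using j0 y0o by (intro sum_single) auto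
      ultimately show ?thesis using j0 by simp
    qed
    have "C \<subseteq> {\<lambda>_. 0}"
    proof
      fix c assume c: "c \<in> C"
      have "c i = 0" for i
      proof (cases "i < n")
        case True
        have "rot (i + n - j0) c j0 = 0" using cj rot_C[OF c] by simp
        thus ?thesis using rot_at[OF j0(1) True, where c=c] by simp
      next
        case False thus ?thesis using c unfolding C_iff words_def by simp
      qed
      thus "c \<in> {\<lambda>_. 0}" by auto
    qed
    hence "card C \<le> card {\<lambda>_::nat. (0::'a)}" by (rule card_mono[rotated]) simp
    hence "card C \<le> 1" by simp
    moreover have "CARD('a) ^ 1 \<le> CARD('a) ^ k" using q2 k_pos by (intro power_increasing) auto
    hence "CARD('a) ^ k \<ge> 2" using q2 by simp
    ultimately show False using cCk by simp
  qed
  have loc: "has_locality n C (e - 1) 2 i" if i: "i < n" for i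
  proof -
    define y where "y = rot (j0 + n - i) y0"
    have yD: "y \<in> D" unfolding y_def D_def using rot_dual y0(1) D_def by simp
    have yi: "y i \<noteq> 0" unfolding y_def using rot_at[OF i j0(1), where c=y0] j0 by simp
    have wy: "weight n y = e" unfolding y_def weight_rot y0(3) ..
    define S where "S = supp y"
    have S: "S \<subseteq> {..<n}" "i \<in> S" "card S = e" using yi i wy unfolding S_def supp_def weight_supp by auto
    have yz: "\<forall>i<n. i \<notin> S \<longrightarrow> y i = 0" unfolding S_def supp_def by auto
    have "\<forall>c\<in>puncture S C. c \<noteq> (\<lambda>_. 0) \<longrightarrow> weight n c \<ge> 2"
    proof (intro ballI impI)
      fix c' assume c': "c' \<in> puncture S C" "c' \<noteq> (\<lambda>_. 0)"
      then obtain c where c: "c \<in> C" "c' = proj S c" unfolding puncture_def proj_def by auto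
      have c'w: "c' \<in> words n" using S(1) unfolding c(2) proj_def words_def by auto
      obtain j where j: "j < n" "c' j \<noteq> 0" using nonzero_ex[OF c'w c'(2)] by blast
      show "weight n c' \<ge> 2"
      proof (rule ccontr)
        assume "\<not> weight n c' \<ge> 2"
        hence "card (supp c') \<le> 1" unfolding weight_supp by simp
        moreover have "j \<in> supp c'" using j unfolding supp_def by simp
        moreover have "finite (supp c')" using supp_sub finite_subset by blast
        ultimately have one: "\<forall>a\<in>supp c'. \<forall>b\<in>supp c'. a = b" using card_le_Suc0_iff_eq by auto
        have o: "\<forall>i<n. i \<noteq> j \<longrightarrow> c' i = 0"
        proof (intro allI impI)
          fix i assume "i < n" "i \<noteq> j"
          thus "c' i = 0" using one \<open>j \<in> supp c'\<close> unfolding supp_def by auto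
        qed
        have jS: "j \<in> S" using j unfolding c(2) proj_def by (cases "j \<in> S") auto
        have "y j \<noteq> 0" using jS unfolding S_def supp_def by simp
        moreover have "(\<Sum>i<n. c' i * y i) = 0" unfolding c(2) using proj_dual[of y S c] yD yz c(1) unfolding D_def by simp
        ultimately have "c' j = 0" using diff_zero[of j y c'] j o by simp
        thus False using j by simp
      qed
    qed
    thus ?thesis unfolding has_locality_def using S e1 by (intro exI[of _ S]) auto
  qed
  have bchC: "\<forall>c\<in>C. c \<noteq> (\<lambda>_. 0) \<longrightarrow> m+1 \<le> weight n c" using bch by blast
  obtain cS where cS: "cS \<in> C" "cS \<noteq> (\<lambda>_. 0)" "weight n cS \<le> m+2"
  proof -
    have T: "{..<k-1} \<subseteq> {..<n}" using n_eq by auto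
    have "\<exists>c\<in>C. c \<noteq> (\<lambda>_. 0) \<and> weight n c \<le> n - card {..<k-1}"
    proof (rule pigeon[OF T])
      show "\<forall>c\<in>C. proj {..<k-1} c \<in> supw {..<k-1}" using proj_supw by blast
      show "finite (supw {..<k-1} :: (nat \<Rightarrow> 'a) set)" by (simp add: finite_supw)
      show "card (supw {..<k-1} :: (nat \<Rightarrow> 'a) set) < card C" using card_supw[of "{..<k-1}", where 'a='a] qk cCk by simp
    qed
    thus ?thesis using that n_eq k_pos by auto
  qed
  have dge: "d \<ge> m+1" unfolding d_def using min_ge[OF cS(1,2)] bchC by blast
  have dle: "d \<le> m+2" unfolding d_def using min_le[OF cS(1,2)] cS(3) by simp
  have optd: "int d = int n - int k - (\<lceil>real k / real (e-1)\<rceil> - 1) * (int 2 - 1) + 1"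
  proof (cases "e \<ge> k+1")
    case True
    have "d \<ge> m+2" unfolding d_def
    proof (rule min_ge[OF cS(1,2)], intro ballI impI)
      fix c assume c: "c \<in> C" "c \<noteq> (\<lambda>_. 0)"
      show "m+2 \<le> weight n c"
      proof (rule ccontr)
        assume "\<not> m+2 \<le> weight n c"
        hence w: "weight n c = m+1" using bch[OF c] by simp
        obtain H where H: "H \<noteq> 0" "\<forall>j. coeff H j \<noteq> 0 \<longrightarrow> j \<in> J" "\<forall>i\<in>supp c. poly H (\<gamma>^i) = 0"
          using mds_case[OF c w] by blast
        have yD: "yw H \<in> D" unfolding D_def using yw_dual[OF H(2)] .
        have "supp (yw H) \<subseteq> {..<n} - supp c" using H(3) unfolding supp_def yw_def by auto
        hence "weight n (yw H) \<le> card ({..<n} - supp c)" unfolding weight_supp by (intro card_mono) auto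
        also have "\<dots> = n - card (supp c)" using supp_sub[of c] finite_subset[OF supp_sub[of c]] by (simp add: card_Diff_subset)
        also have "\<dots> = n - (m+1)" using w unfolding weight_supp by simp
        finally have "weight n (yw H) \<le> k" unfolding k_def .
        moreover have "e \<le> weight n (yw H)" using eD yD yw_nz[OF H(1,2)] by blast
        ultimately show False using True by simp
      qed
    qed
    hence dd: "d = m+2" using dle by simp
    have ep: "real (e-1) > 0" using e2 by simp
    have "real k \<le> real (e-1)" using True by simp
    hence "real k / real (e-1) \<le> 1" using divide_le_eq_1_pos[OF ep] by simp
    moreover have "real k / real (e-1) > 0" using ep k_pos by simp
    ultimately have "\<lceil>real k / real (e-1)\<rceil> = 1" by (intro ceiling_unique) auto
    thus ?thesis using dd n_eq by simp
  next
    case False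
    hence ek: "e \<le> k" by simp
    have ck: "card (supp y0) \<le> k" using S1(3) ek by simp
    have kn: "k \<le> n" using n_eq by simp
    obtain T where T: "supp y0 \<subseteq> T" "T \<subseteq> {..<n}" "card T = k"
      using extend_set[OF S1(1) ck kn] by blast
    have "d \<le> m+1"
    proof -
      have WB: "finite {v \<in> supw T. (\<Sum>i<n. v i * y0 i) = 0} \<and> card {v \<in> supw T. (\<Sum>i<n. v i * y0 i) = 0} \<le> CARD('a) ^ (card T - 1)"
      proof -
        have "j0 \<in> T" using T(1) S1(2) by blast
        from W1_bound[where y=y0, OF T(2) this j0(2)] show ?thesis .
      qed
      have y0z'': "\<forall>i<n. i \<notin> T \<longrightarrow> y0 i = 0" using T(1) y0z by blast
      have y0D: "y0 \<in> dual_code n C" using y0(1) unfolding D_def .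
      have "\<forall>c\<in>C. proj T c \<in> {v \<in> supw T. (\<Sum>i<n. v i * y0 i) = 0}"
        using proj_supw proj_dual[OF y0D y0z''] by blast
      moreover have "card {v \<in> supw T. (\<Sum>i<n. v i * y0 i) = 0} < card C" using WB T(3) qk cCk by simp
      ultimately obtain c where c: "c \<in> C" "c \<noteq> (\<lambda>_. 0)" "weight n c \<le> n - card T"
        using pigeon[OF T(2)] WB by blast
      hence "d \<le> weight n c" unfolding d_def using min_le by blast
      thus ?thesis using c T(3) n_eq by simp
    qed
    hence dd: "d = m+1" using dge by simp
    have k2: "k \<le> 2*(e-1)"
    proof (rule ccontr)
      assume kk: "\<not> k \<le> 2*(e-1)"
      have "card (supp y0) < n" using S1 ek n_eq by simp
      have "\<not> {..<n} \<subseteq> supp y0"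
      proof
        assume "{..<n} \<subseteq> supp y0"
        hence "card {..<n} \<le> card (supp y0)" using fS1 by (intro card_mono) auto
        thus False using \<open>card (supp y0) < n\<close> by simp
      qed
      then obtain i where i: "i < n" "i \<notin> supp y0" by auto
      define y1 where "y1 = rot (j0 + n - i) y0"
      have y1D: "y1 \<in> D" unfolding y1_def D_def using rot_dual y0(1) D_def by simp
      have y1i: "y1 i \<noteq> 0" unfolding y1_def using rot_at[OF i(1) j0(1), where c=y0] j0 by simp
      have S2: "supp y1 \<subseteq> {..<n}" "card (supp y1) = e"
        using supp_sub y0(3) unfolding y1_def weight_supp[symmetric] weight_rot by auto
      have "card (supp y0 \<union> supp y1) \<le> card (supp y0) + card (supp y1)" by (rule card_Un_le)
      hence cu: "card (supp y0 \<union> supp y1) \<le> k+1" using S1(3) S2(2) kk by simp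
      have un: "supp y0 \<union> supp y1 \<subseteq> {..<n}" using S1(1) S2(1) by blast
      have kn1: "k+1 \<le> n" using n_eq by simp
      obtain T where T: "supp y0 \<union> supp y1 \<subseteq> T" "T \<subseteq> {..<n}" "card T = k+1"
        using extend_set[OF un cu kn1] by blast
      have y1z: "\<forall>i<n. i \<notin> T \<longrightarrow> y1 i = 0" using T(1) unfolding supp_def by auto
      have y0z': "\<forall>i<n. i \<notin> T \<longrightarrow> y0 i = 0" using T(1) unfolding supp_def by auto
      have iT: "i \<in> T" using T(1) y1i i unfolding supp_def by auto
      have j0T: "j0 \<in> T" using T(1) S1 by auto
      have y0i: "y0 i = 0" using i unfolding supp_def by simp
      have ij: "i \<noteq> j0" using i S1 by auto
      let ?W = "{v \<in> supw T. (\<Sum>i<n. v i * y1 i) = 0 \<and> (\<Sum>i<n. v i * y0 i) = 0}"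
      have WB: "finite ?W \<and> card ?W \<le> CARD('a) ^ (card T - 2)"
        using W2_bound[where ya=y1 and yb=y0, OF T(2) iT j0T ij y1i y0i j0(2)] .
      have y0D: "y0 \<in> dual_code n C" using y0(1) unfolding D_def .
      have y1D': "y1 \<in> dual_code n C" using y1D unfolding D_def .
      have "\<forall>c\<in>C. proj T c \<in> ?W"
        using proj_supw proj_dual[OF y0D y0z'] proj_dual[OF y1D' y1z] by blast
      moreover have "card ?W < card C" using WB T(3) qk cCk by simp
      ultimately obtain c where c: "c \<in> C" "c \<noteq> (\<lambda>_. 0)" "weight n c \<le> n - card T"
        using pigeon[OF T(2)] WB by blast
      thus False using bch[OF c(1,2)] T(3) n_eq by simp
    qed
    have ep: "real (e-1) > 0" using e2 by simp
    have "real k \<le> real (2 * (e-1))" using k2 by (simp only: of_nat_le_iff)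
    hence "real k \<le> 2 * real (e-1)" by simp
    hence "real k / real (e-1) \<le> 2" using pos_divide_le_eq[OF ep] by simp
    moreover have "1 * real (e-1) < real k" using ek e2 by simp
    hence "real k / real (e-1) > 1" using pos_less_divide_eq[OF ep] by simp
    ultimately have "\<lceil>real k / real (e-1)\<rceil> = 2" by (intro ceiling_unique) auto
    thus ?thesis using dd n_eq by simp
  qed
  show ?thesis
    unfolding optimal_LRC_def is_LRC_def code_dim_C
    using C_cyclic loc e2 optd unfolding d_def e_def D_def by auto
qed

end

theorem corollary4p6:
  fixes \<alpha> :: "'a::{field,finite}" and n b m t l :: nat
  assumes "n dvd CARD('a) - 1"
    and "\<alpha> ^ n = 1" and "\<forall>j. 0 < j \<and> j < n \<longrightarrow> \<alpha> ^ j \<noteq> 1"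
    and "b \<ge> 1" and "m \<ge> 1" and "coprime b n" and "t < n"
    and "m + 1 \<le> l" and "l + 2 \<le> n"
  defines "A \<equiv> {\<alpha> ^ (t + j * b) | j. j < m} \<union> {\<alpha> ^ (t + l * b)}"
  shows "is_cyclic n (cyclic_code n A) \<and>
         optimal_LRC n (cyclic_code n A) (min_dist n (dual_code n (cyclic_code n A)) - 1) 2"
proof -
  have ccx: "cc \<alpha> n b m t l" using assms(2-9) by unfold_locales auto
  have "A = cc.A \<alpha> b m t l" unfolding A_def by (simp add: cc.A_def[OF ccx])
  hence "cyclic_code n A = cc.C \<alpha> n b m t l" unfolding cc.C_def[OF ccx] by simp
  thus ?thesis using cc.main[OF ccx] by simp
qed

end
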